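(* Let $V=\{x_1,\dots,x_n\}$ be a list of $n$ real numbers in the interval $[L,U]$ and let $k$ be an integer with $k<n$. Then a $k$-minimal variance subset of $V$ can be computed in $\mathcal{O}(n^2)$ time.
   Context: For a finite (multi)set $Q$ of reals with $|Q|=k$, $\mathrm{Var}[Q]=\frac{1}{k}\sum_{q\in Q}(q-\mu_Q)^2$ with $\mu_Q=\frac1k\sum_{q\in Q}q$. Given $V$ listed in ascending order and an integer $k<n$, a subset $Q\subset V$ (a choice of $k$ of the $n$ entries) is a $k$-minimal variance subset of $V$ if $|Q|=k$ and $\mathrm{Var}[Q']\ge\mathrm{Var}[Q]$ for every $Q'\subset V$ with $|Q'|=k$. *)

theory Defs
  imports Complex_Main "HOL-Library.Multiset" "HOL-Library.Time_Functions"
begin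

text \<open>A sub(multi)set of the entries of V is modelled as a sub-multiset of mset V.\<close>

definition Var :: "real multiset \<Rightarrow> real" where
  "Var Q = (let k = real (size Q); \<mu> = sum_mset Q / k
            in sum_mset (image_mset (\<lambda>q. (q - \<mu>)\<^sup>2) Q) / k)"

definition k_minimal_variance_subset :: "real list \<Rightarrow> nat \<Rightarrow> real multiset \<Rightarrow> bool" where
  "k_minimal_variance_subset V k Q \<longleftrightarrow>
     Q \<subseteq># mset V \<and> size Q = k \<and>
     (\<forall>Q'. Q' \<subseteq># mset V \<and> size Q' = k \<longrightarrow> Var Q \<le> Var Q')"

fun takeL :: "nat \<Rightarrow> real list \<Rightarrow> real list" where
  "takeL 0 xs = []"
| "takeL (Suc n) [] = []"
| "takeL (Suc n) (x # xs) = x # takeL n xs"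

fun lenL :: "real list \<Rightarrow> nat" where
  "lenL [] = 0"
| "lenL (x # xs) = Suc (lenL xs)"

fun lenR :: "real list \<Rightarrow> real" where
  "lenR [] = 0"
| "lenR (x # xs) = 1 + lenR xs"

fun sumL :: "real list \<Rightarrow> real" where
  "sumL [] = 0"
| "sumL (x # xs) = x + sumL xs"

fun sqdevL :: "real \<Rightarrow> real list \<Rightarrow> real" where
  "sqdevL m [] = 0"
| "sqdevL m (x # xs) = (x - m) * (x - m) + sqdevL m xs"

fun varL :: "real list \<Rightarrow> real" where
  "varL xs = (let l = lenR xs; m = sumL xs / l in sqdevL m xs / l)"

fun bestW :: "nat \<Rightarrow> nat \<Rightarrow> real list \<Rightarrow> real list" where
  "bestW k 0 xs = takeL k xs"
| "bestW k (Suc m) [] = []"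
| "bestW k (Suc m) (x # xs) =
     (let w = takeL k (x # xs); b = bestW k m xs in if varL w \<le> varL b then w else b)"

fun mvs :: "nat \<Rightarrow> real list \<Rightarrow> real list" where
  "mvs k V = bestW k (lenL V - k) V"

text \<open>Running-time functions, written in the style generated by the time_fun
  command of HOL-Library.Time_Functions (each function call costs 1 plus the cost of
  the calls it makes; primitive operations on numbers are free).\<close>

fun T_takeL :: "nat \<Rightarrow> real list \<Rightarrow> nat" where
  "T_takeL 0 xs = 1"
| "T_takeL (Suc n) [] = 1"
| "T_takeL (Suc n) (x # xs) = T_takeL n xs + 1"

fun T_lenL :: "real list \<Rightarrow> nat" where
  "T_lenL [] = 1"
| "T_lenL (x # xs) = T_lenL xs + 1"

fun T_lenR :: "real list \<Rightarrow> nat" where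
  "T_lenR [] = 1"
| "T_lenR (x # xs) = T_lenR xs + 1"

fun T_sumL :: "real list \<Rightarrow> nat" where
  "T_sumL [] = 1"
| "T_sumL (x # xs) = T_sumL xs + 1"

fun T_sqdevL :: "real \<Rightarrow> real list \<Rightarrow> nat" where
  "T_sqdevL m [] = 1"
| "T_sqdevL m (x # xs) = T_sqdevL m xs + 1"

fun T_varL :: "real list \<Rightarrow> nat" where
  "T_varL xs = (let l = lenR xs; m = sumL xs / l
                in T_lenR xs + T_sumL xs + T_sqdevL m xs + 1)"

fun T_bestW :: "nat \<Rightarrow> nat \<Rightarrow> real list \<Rightarrow> nat" where
  "T_bestW k 0 xs = T_takeL k xs + 1"
| "T_bestW k (Suc m) [] = 1"
| "T_bestW k (Suc m) (x # xs) =
     (let w = takeL k (x # xs); b = bestW k m xs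
      in T_takeL k (x # xs) + T_bestW k m xs + T_varL w + T_varL b + 1)"

fun T_mvs :: "nat \<Rightarrow> real list \<Rightarrow> nat" where
  "T_mvs k V = T_lenL V + T_bestW k (lenL V - k) V + 1"

end

theory Submission
  imports Defs
begin

lemma takeL_eq[simp]: "takeL n xs = take n xs"
  by (induction n xs rule: takeL.induct) auto

lemma lenL_eq[simp]: "lenL xs = length xs"
  by (induction xs) auto

lemma lenR_eq[simp]: "lenR xs = real (length xs)"
  by (induction xs) auto

lemma sumL_eq[simp]: "sumL xs = sum_list xs"
  by (induction xs) auto

lemma sqdevL_eq[simp]: "sqdevL m xs = sum_list (map (\<lambda>x. (x - m)\<^sup>2) xs)"
  by (induction xs) (auto simp: power2_eq_square)

lemma summ_list: "sum_mset (image_mset f (mset xs)) = sum_list (map f (xs::real list))"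
  by (induction xs) auto

lemma varL_eq: "varL xs = Var (mset xs)"
  by (simp add: Var_def sum_mset_sum_list summ_list Let_def)

lemma Var_list: "Var (mset xs) = (let k = real (length xs); \<mu> = sum_list xs / k
   in sum_list (map (\<lambda>q. (q - \<mu>)\<^sup>2) xs) / k)"
  by (simp add: Var_def sum_mset_sum_list summ_list)

lemma var_le_any:
  "Var (mset xs) \<le> sum_list (map (\<lambda>x. (x - c)\<^sup>2) xs) / real (length xs)"
proof (cases "xs = []")
  case True then show ?thesis by (simp add: Var_def)
next
  case False
  define k where "k = real (length xs)"
  define \<mu> where "\<mu> = sum_list xs / k"
  have kpos: "k > 0" using False by (simp add: k_def)
  define n where "n = length xs"
  have S: "(\<Sum>i<n. xs ! i) = k * \<mu>"
    using kpos by (simp add: \<mu>_def sum_list_sum_nth n_def lessThan_atLeast0)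
  have "(\<Sum>i<n. (xs!i - c)\<^sup>2) - (\<Sum>i<n. (xs!i - \<mu>)\<^sup>2)
      = (\<Sum>i<n. (\<mu> - c) * (2 * xs!i) + (c\<^sup>2 - \<mu>\<^sup>2))"
    by (simp add: sum_subtractf[symmetric] power2_eq_square algebra_simps; rule sum.cong; simp add: algebra_simps)
  also have "\<dots> = (\<mu> - c) * 2 * (\<Sum>i<n. xs!i) + k * (c\<^sup>2 - \<mu>\<^sup>2)"
  proof -
    have "(\<Sum>i<n. (\<mu> - c) * (2 * xs!i)) = (\<mu> - c) * 2 * (\<Sum>i<n. xs!i)"
      by (simp only: sum_distrib_left) (rule sum.cong, auto)
    then show ?thesis by (simp add: sum.distrib k_def n_def)
  qed
  also have "\<dots> = k * (\<mu> - c)\<^sup>2" by (simp add: S power2_eq_square algebra_simps)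
  finally have "(\<Sum>i<n. (xs!i - \<mu>)\<^sup>2) \<le> (\<Sum>i<n. (xs!i - c)\<^sup>2)"
    using kpos by (smt (verit) mult_nonneg_nonneg zero_le_power2)
  then have "sum_list (map (\<lambda>q. (q - \<mu>)\<^sup>2) xs) \<le> sum_list (map (\<lambda>x. (x - c)\<^sup>2) xs)"
    by (simp add: sum_list_sum_nth n_def lessThan_atLeast0)
  then show ?thesis using kpos
    by (simp add: Var_list k_def \<mu>_def Let_def divide_right_mono)
qed

lemma sq_between:
  fixes a y b c :: real
  assumes "a \<le> y" "y \<le> b"
  shows "(y - c)\<^sup>2 \<le> (a - c)\<^sup>2 \<or> (y - c)\<^sup>2 \<le> (b - c)\<^sup>2"
proof (cases "y \<le> c")
  case True
  then have "\<bar>y - c\<bar> \<le> \<bar>a - c\<bar>" using assms by linarith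
  then show ?thesis by (simp add: abs_le_square_iff)
next
  case False
  then have "\<bar>y - c\<bar> \<le> \<bar>b - c\<bar>" using assms by linarith
  then show ?thesis by (simp add: abs_le_square_iff)
qed

lemma exch:
  fixes g :: "'a \<Rightarrow> real"
  assumes "a \<in># Q" "add_mset y Q \<subseteq># add_mset a M" "g y \<le> g a"
  shows "add_mset y (Q - {#a#}) \<subseteq># M \<and> size (add_mset y (Q - {#a#})) = size Q
     \<and> sum_mset (image_mset g (add_mset y (Q - {#a#}))) \<le> sum_mset (image_mset g Q)"
proof -
  have Q: "Q = add_mset a (Q - {#a#})" using assms(1) by simp
  have "add_mset a (add_mset y (Q - {#a#})) = add_mset y Q"
    by (subst (2) Q) simp
  then have "add_mset y (Q - {#a#}) \<subseteq># M" using assms(2)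
    by (metis mset_subset_eq_add_mset_cancel)
  moreover have "size (add_mset y (Q - {#a#})) = size Q"
    by (subst (2) Q) simp
  moreover have "sum_mset (image_mset g (add_mset y (Q - {#a#}))) \<le> sum_mset (image_mset g Q)"
    using assms(3) by (subst (2) Q) simp
  ultimately show ?thesis by blast
qed
lemma notin_sub: "a \<notin># Q \<Longrightarrow> Q \<subseteq># add_mset a W \<Longrightarrow> Q \<subseteq># W"
  by (simp add: inter_add_left1 subset_mset.inf.absorb_iff2)

lemma window_exists:
  fixes c :: real
  shows "sorted V \<Longrightarrow> Q \<subseteq># mset V \<Longrightarrow>
    \<exists>i \<le> length V - size Q. sum_list (map (\<lambda>x. (x - c)\<^sup>2) (take (size Q) (drop i V)))
       \<le> sum_mset (image_mset (\<lambda>x. (x - c)\<^sup>2) Q)"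
proof (induction "length V" arbitrary: V Q rule: less_induct)
  case less
  define g where "g = (\<lambda>x::real. (x - c)\<^sup>2)"
  define k where "k = size Q"
  have kle: "k \<le> length V" using size_mset_mono[OF less.prems(2)] by (simp add: k_def)
  show ?case
  proof (cases "k = length V")
    case True
    have "\<not> Q \<subset># mset V" using mset_subset_size[of Q "mset V"] True k_def by auto
    then have "Q = mset V" using less.prems(2) subset_mset.le_less by blast
    then show ?thesis by (auto simp: summ_list k_def intro!: exI[of _ 0])
  next
    case False
    then have klt: "k < length V" using kle by simp
    then obtain a W where VW: "V = a # W" by (cases V) auto
    obtain b U where VU: "V = U @ [b]" using VW append_butlast_last_id[of V] by (metis list.distinct(1))
    have sW: "sorted W" using less.prems(1) VW by simp
    have sU: "sorted U" using less.prems(1) VU by (simp add: sorted_append)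
    have lW1: "length W < length V" using VW by simp
    have lW2: "length U < length V" using VU by simp
    have mW: "mset V = add_mset a (mset W)" using VW by simp
    have mU: "mset V = add_mset b (mset U)" using VU by simp
    have tailcase: "\<exists>i \<le> length V - size Q'. sum_list (map g (take (size Q') (drop i V)))
       \<le> sum_mset (image_mset g Q')" if QW: "Q' \<subseteq># mset W" for Q'
    proof -
      obtain i where "i \<le> length W - size Q'"
        "sum_list (map g (take (size Q') (drop i W))) \<le> sum_mset (image_mset g Q')"
        using less.hyps[OF lW1 sW QW] unfolding g_def by blast
      moreover have "size Q' \<le> length W" using size_mset_mono[OF QW] by simp
      ultimately show ?thesis using VW by (intro exI[of _ "Suc i"]) auto
    qed
    have initcase: "\<exists>i \<le> length V - size Q'. sum_list (map g (take (size Q') (drop i V)))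
       \<le> sum_mset (image_mset g Q')" if QU: "Q' \<subseteq># mset U" for Q'
    proof -
      obtain i where i: "i \<le> length U - size Q'"
        "sum_list (map g (take (size Q') (drop i U))) \<le> sum_mset (image_mset g Q')"
        using less.hyps[OF lW2 sU QU] unfolding g_def by blast
      have "size Q' \<le> length U" using size_mset_mono[OF QU] by simp
      then have "take (size Q') (drop i V) = take (size Q') (drop i U)"
        using i(1) VU by simp
      then show ?thesis using i VU by (intro exI[of _ i]) auto
    qed
    have "size (mset V - Q) > 0"
      using size_Diff_submset[OF less.prems(2)] klt k_def by simp
    then have "mset V - Q \<noteq> {#}" by auto
    then obtain y where y: "y \<in># mset V - Q" by (meson multiset_nonemptyE)
    have "{#y#} \<subseteq># mset V - Q" using y by simp
    then have "Q + {#y#} \<subseteq># Q + (mset V - Q)" by (rule subset_mset.add_left_mono)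
    also have "Q + (mset V - Q) = mset V" using less.prems(2) by (rule subset_mset.add_diff_inverse)
    finally have Qy: "add_mset y Q \<subseteq># mset V" by simp
    have yV: "y \<in> set V" using in_diffD[OF y] by simp
    have ay: "a \<le> y" using yV VW less.prems(1) by auto
    have yb: "y \<le> b" using yV VU less.prems(1) by (auto simp: sorted_append)
    show ?thesis
    proof (cases "a \<in># Q \<and> b \<in># Q")
      case False
      then have "\<not> a \<in># Q \<or> \<not> b \<in># Q" by blast
      then show ?thesis
      proof
        assume "\<not> a \<in># Q"
        then have "Q \<subseteq># mset W" using less.prems(2) mW notin_sub by metis
        then show ?thesis using tailcase unfolding g_def k_def by blast
      next
        assume "\<not> b \<in># Q"
        then have "Q \<subseteq># mset U" using less.prems(2) mU notin_sub by metis
        then show ?thesis using initcase unfolding g_def k_def by blast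
      qed
    next
      case True
      from sq_between[OF ay yb, of c] show ?thesis
      proof
        assume "(y - c)\<^sup>2 \<le> (a - c)\<^sup>2"
        then have "g y \<le> g a" by (simp add: g_def)
        from exch[of a Q y "mset W" g] this True Qy mW
        obtain Q' where "Q' \<subseteq># mset W" "size Q' = size Q"
          "sum_mset (image_mset g Q') \<le> sum_mset (image_mset g Q)" by auto
        with tailcase[OF this(1)] show ?thesis unfolding g_def by force
      next
        assume "(y - c)\<^sup>2 \<le> (b - c)\<^sup>2"
        then have "g y \<le> g b" by (simp add: g_def)
        from exch[of b Q y "mset U" g] this True Qy mU
        obtain Q' where "Q' \<subseteq># mset U" "size Q' = size Q"
          "sum_mset (image_mset g Q') \<le> sum_mset (image_mset g Q)" by auto
        with initcase[OF this(1)] show ?thesis unfolding g_def by force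
      qed
    qed
  qed
qed


lemma bestW_prop:
  "length xs = m + k \<Longrightarrow> (\<exists>i\<le>m. bestW k m xs = take k (drop i xs)) \<and>
     (\<forall>i\<le>m. varL (bestW k m xs) \<le> varL (take k (drop i xs)))"
proof (induction k m xs rule: bestW.induct)
  case (1 k xs)
  then show ?case by auto
next
  case (2 k m)
  then show ?case by simp
next
  case (3 k m x xs)
  then have IH: "\<exists>i\<le>m. bestW k m xs = take k (drop i xs)"
     "\<forall>i\<le>m. varL (bestW k m xs) \<le> varL (take k (drop i xs))" by auto
  define w where "w = take k (x # xs)"
  define b where "b = bestW k m xs"
  have eq: "bestW k (Suc m) (x # xs) = (if varL w \<le> varL b then w else b)"
    by (simp add: w_def b_def Let_def del: varL.simps)
  have ex: "\<exists>i\<le>Suc m. bestW k (Suc m) (x # xs) = take k (drop i (x # xs))"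
  proof (cases "varL w \<le> varL b")
    case True then show ?thesis using eq by (intro exI[of _ 0]) (simp add: w_def)
  next
    case False
    obtain i where "i \<le> m" "b = take k (drop i xs)" using IH(1) b_def by blast
    then show ?thesis using eq False by (intro exI[of _ "Suc i"]) simp
  qed
  have le: "varL (bestW k (Suc m) (x # xs)) \<le> varL (take k (drop i (x # xs)))" if "i \<le> Suc m" for i
  proof (cases i)
    case 0 then show ?thesis using eq by (simp add: w_def[symmetric] del: varL.simps)
  next
    case (Suc j)
    then have "varL b \<le> varL (take k (drop j xs))" using IH(2) that b_def by simp
    then show ?thesis using eq Suc by (simp del: varL.simps)
  qed
  show ?case using ex le by blast
qed

lemma T_takeL_le: "T_takeL n xs \<le> n + 1"
  by (induction n xs rule: T_takeL.induct) auto

lemma T_lenR_eq: "T_lenR xs = length xs + 1" by (induction xs) auto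
lemma T_lenL_eq: "T_lenL xs = length xs + 1" by (induction xs) auto
lemma T_sumL_eq: "T_sumL xs = length xs + 1" by (induction xs) auto
lemma T_sqdevL_eq: "T_sqdevL m xs = length xs + 1" by (induction xs) auto

lemma T_varL_eq: "T_varL xs = 3 * length xs + 4"
  by (simp add: T_lenR_eq T_sumL_eq T_sqdevL_eq Let_def)

lemma length_bestW: "length (bestW k m xs) \<le> k"
  by (induction k m xs rule: bestW.induct) (auto simp: Let_def simp del: varL.simps)

lemma T_bestW_le: "T_bestW k m xs \<le> (m + 1) * (7 * k + 10)"
proof (induction k m xs rule: bestW.induct)
  case (1 k xs)
  then show ?case using T_takeL_le[of k xs] by simp
next
  case (2 k m)
  then show ?case by simp
next
  case (3 k m x xs)
  have a: "T_takeL k (x # xs) \<le> k + 1" by (rule T_takeL_le)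
  have b: "T_varL (take k (x # xs)) \<le> 3 * k + 4" by (simp only: T_varL_eq) simp
  have c: "T_varL (bestW k m xs) \<le> 3 * k + 4" using length_bestW[of k m xs] by (simp only: T_varL_eq)
  show ?case using a b c 3 by (simp add: Let_def del: T_varL.simps)
qed


lemma window_sub: "mset (take k (drop i V)) \<subseteq># mset V"
proof -
  have "mset (take k (drop i V)) \<subseteq># mset (drop i V)"
    by (metis append_take_drop_id mset_append mset_subset_eq_add_left)
  also have "mset (drop i V) \<subseteq># mset V"
    by (metis append_take_drop_id mset_append mset_subset_eq_add_right)
  finally show ?thesis .
qed

theorem mainTheorem4:
  "\<exists>c::real. \<forall>(V::real list) (k::nat) (L::real) (U::real).
      sorted V \<and> set V \<subseteq> {L..U} \<and> k < length V \<longrightarrow>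
        k_minimal_variance_subset V k (mset (mvs k V)) \<and>
        real (T_mvs k V) \<le> c * real (length V) ^ 2"
proof (intro exI[of _ 40] allI impI)
  fix V :: "real list" and k :: nat and L U :: real
  assume A: "sorted V \<and> set V \<subseteq> {L..U} \<and> k < length V"
  define n where "n = length V"
  define m where "m = n - k"
  have len: "length V = m + k" using A by (simp add: n_def m_def)
  have mv: "mvs k V = bestW k m V" by (simp add: m_def n_def del: bestW.simps)
  obtain i where i: "i \<le> m" "bestW k m V = take k (drop i V)"
    using bestW_prop[OF len] by blast
  have opt: "\<forall>j\<le>m. varL (bestW k m V) \<le> varL (take k (drop j V))"
    using bestW_prop[OF len] by blast
  have kms: "k_minimal_variance_subset V k (mset (mvs k V))"
    unfolding k_minimal_variance_subset_def
  proof (intro conjI allI impI)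
    show "mset (mvs k V) \<subseteq># mset V" using mv i window_sub by simp
    show "size (mset (mvs k V)) = k" using mv i len by simp
    fix Q' assume Q': "Q' \<subseteq># mset V \<and> size Q' = k"
    obtain xs where xs: "mset xs = Q'" using ex_mset by blast
    define \<mu> where "\<mu> = sum_list xs / real (length xs)"
    obtain j where j: "j \<le> length V - size Q'"
      "sum_list (map (\<lambda>x. (x - \<mu>)\<^sup>2) (take (size Q') (drop j V)))
       \<le> sum_mset (image_mset (\<lambda>x. (x - \<mu>)\<^sup>2) Q')"
      using window_exists[of V Q' \<mu>] A Q' by blast
    have lx: "length xs = k" using xs Q' by auto
    have jm: "j \<le> m" using j(1) Q' len by simp
    have lw: "length (take k (drop j V)) = k" using jm len by simp
    have "Var (mset (mvs k V)) = varL (bestW k m V)" using mv varL_eq by simp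
    also have "\<dots> \<le> varL (take k (drop j V))" using opt jm by blast
    also have "\<dots> = Var (mset (take k (drop j V)))" by (rule varL_eq)
    also have "\<dots> \<le> sum_list (map (\<lambda>x. (x - \<mu>)\<^sup>2) (take k (drop j V))) / real k"
      using var_le_any[of "take k (drop j V)" \<mu>] lw by simp
    also have "\<dots> \<le> sum_list (map (\<lambda>x. (x - \<mu>)\<^sup>2) xs) / real k"
      using j(2) Q' xs by (auto simp: summ_list intro: divide_right_mono)
    also have "\<dots> = Var Q'"
      using Var_list[of xs] xs lx by (simp add: \<mu>_def Let_def)
    finally show "Var (mset (mvs k V)) \<le> Var Q'" .
  qed
  have T1: "T_mvs k V = (n + 1) + T_bestW k m V + 1"
    by (simp add: T_lenL_eq n_def m_def del: T_bestW.simps)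
  have T2: "T_bestW k m V \<le> (m + 1) * (7 * k + 10)" by (rule T_bestW_le)
  have n1: "n \<ge> 1" and km: "k < n" "m \<le> n" using A by (auto simp: n_def m_def)
  have "(m + 1) * (7 * k + 10) \<le> (2 * n) * (17 * n)"
    using n1 km by (intro mult_mono) auto
  then have "T_mvs k V \<le> 40 * n ^ 2" using T1 T2 n1
  proof -
    have nn: "n \<le> n * n" using n1 by simp
    have "(2 * n) * (17 * n) = 34 * (n * n)" by simp
    then have "T_mvs k V \<le> n + 2 + 34 * (n * n)"
      using T1 T2 \<open>(m + 1) * (7 * k + 10) \<le> (2 * n) * (17 * n)\<close> by linarith
    moreover have "n + 2 \<le> 6 * (n * n)" using nn n1 by linarith
    ultimately show ?thesis unfolding power2_eq_square by linarith
  qed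
  then have "real (T_mvs k V) \<le> real (40 * n ^ 2)" by (simp only: of_nat_le_iff)
  then show "k_minimal_variance_subset V k (mset (mvs k V)) \<and>
        real (T_mvs k V) \<le> 40 * real (length V) ^ 2" using kms by (simp add: n_def)
qed

end
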